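(* Let $p$ be an odd prime, let $v$ be an integer with $1<v<p-1$, let $g\in\{2,\dots,p-1\}$ be a primitive root modulo $p$ with $\gcd(g,v)=1$, let $t\ge1$ and $b\in\{0,\dots,v-1\}$. Let $$\rho(b,t)=\#\{i\in[1,p-1]:\ g^i\,\%\,p\not\equiv b,\ g^{i+t+1}\,\%\,p\not\equiv b,\ g^{i+j}\,\%\,p\equiv b\ (1\le j\le t)\},$$ all congruences modulo $v$. Write $p=q\,g^{t+1}+r$ with $0\le r<g^{t+1}$. Then $$\left\lfloor\frac{g}{v}\right\rfloor^{t-1}\left\lfloor\frac{(v-1)g}{v}\right\rfloor^2\left\lfloor\frac{q}{v}\right\rfloor\ \le\ \rho(b,t)\ \le\ \left\lceil\frac{g}{v}\right\rceil^{t-1}\left\lceil\frac{(v-1)g}{v}\right\rceil^2\left\lceil\frac{q+1}{v}\right\rceil.$$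
   Context: $x\,\%\,p$ denotes the least nonnegative remainder of the integer $x$ modulo $p$. *)

theory Defs
  imports "HOL-Number_Theory.Number_Theory"
begin

definition rho :: "nat \<Rightarrow> nat \<Rightarrow> nat \<Rightarrow> nat \<Rightarrow> nat \<Rightarrow> nat" where
  "rho p g v b t = card {i \<in> {1..p-1}.
      \<not> [g ^ i mod p = b] (mod v) \<and>
      \<not> [g ^ (i + t + 1) mod p = b] (mod v) \<and>
      (\<forall>j \<in> {1..t}. [g ^ (i + j) mod p = b] (mod v))}"

end

theory Submission
  imports Defs
begin


lemma lin_solve:
  fixes k v d c :: nat assumes "coprime k v" "v > 0"
  shows "\<exists>a<v. \<forall>x. [k*x + d = c] (mod v) \<longleftrightarrow> x mod v = a"
proof -
  obtain h where h: "[k*h = Suc 0] (mod v)" using cong_solve_coprime_nat[OF assms(1)] by blast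
  define c' where "c' = c + (v - 1) * d"
  have c': "[c' + d = c] (mod v)"
  proof -
    have "c' + d = c + v * d" unfolding c'_def using assms(2) by (cases v) (auto simp: algebra_simps)
    thus ?thesis by (simp add: cong_def)
  qed
  define a where "a = (h * c') mod v"
  have "[k*x + d = c] (mod v) \<longleftrightarrow> x mod v = a" for x
  proof -
    have "[k*x + d = c] (mod v) \<longleftrightarrow> [k*x + d = c' + d] (mod v)"
      using c' by (meson cong_sym cong_trans)
    also have "\<dots> \<longleftrightarrow> [k*x = c'] (mod v)" by (rule cong_add_rcancel_nat)
    also have "\<dots> \<longleftrightarrow> [x = h*c'] (mod v)"
    proof
      assume "[k*x = c'] (mod v)"
      hence "[h*(k*x) = h*c'] (mod v)" by (rule cong_scalar_left)
      moreover have "[h*(k*x) = x] (mod v)"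
      proof -
        have "[(k*h)*x = Suc 0 * x] (mod v)" using h by (rule cong_scalar_right)
        thus ?thesis by (simp add: ac_simps)
      qed
      ultimately show "[x = h*c'] (mod v)" by (meson cong_sym cong_trans)
    next
      assume "[x = h*c'] (mod v)"
      hence "[k*x = k*(h*c')] (mod v)" by (rule cong_scalar_left)
      moreover have "[k*(h*c') = c'] (mod v)"
      proof -
        have "[(k*h)*c' = Suc 0 * c'] (mod v)" using h by (rule cong_scalar_right)
        thus ?thesis by (simp add: ac_simps)
      qed
      ultimately show "[k*x = c'] (mod v)" by (meson cong_trans)
    qed
    also have "\<dots> \<longleftrightarrow> x mod v = a" unfolding a_def cong_def by simp
    finally show ?thesis .
  qed
  moreover have "a < v" unfolding a_def using assms(2) by simp
  ultimately show ?thesis by blast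
qed

lemma prodcard:
  fixes n m :: nat assumes "m > 0"
  shows "card {K. K < n*m \<and> P (K div m) \<and> R (K mod m)} = card {a. a<n \<and> P a} * card {c. c<m \<and> R c}"
proof -
  have "bij_betw (\<lambda>K. (K div m, K mod m)) {K. K < n*m \<and> P (K div m) \<and> R (K mod m)}
          ({a. a<n \<and> P a} \<times> {c. c<m \<and> R c})"
    apply (rule bij_betw_byWitness[where f' = "\<lambda>(a,c). a*m + c"])
    subgoal by simp
    subgoal using assms by auto
    subgoal using assms by (auto simp: div_less_iff_less_mult)
    subgoal
    proof clarsimp
      fix a c assume "a < n" "c < m"
      hence "a*m + c < a*m + m" by simp
      also have "\<dots> = Suc a * m" by simp
      also have "\<dots> \<le> n * m" using \<open>a<n\<close> by (intro mult_le_mono1) simp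
      finally show "a*m + c < n*m" .
    qed
    done
  from bij_betw_same_card[OF this] show ?thesis by (simp add: card_cartesian_product)
qed

fun allQ :: "(nat \<Rightarrow> bool) \<Rightarrow> nat \<Rightarrow> nat \<Rightarrow> nat \<Rightarrow> bool" where
  "allQ Q g 0 M = True"
| "allQ Q g (Suc n) M = (Q (M mod g) \<and> allQ Q g n (M div g))"

lemma allQ_add:
  assumes "g > 0" shows "allQ Q g n (a * g^n + M) = allQ Q g n M"
  using assms
proof (induction n arbitrary: M)
  case 0 then show ?case by simp
next
  case (Suc n)
  have "(a * g ^ Suc n + M) mod g = M mod g" by (simp add: mod_add_left_eq[symmetric] mult.left_commute)
  moreover have "(a * g ^ Suc n + M) div g = a * g^n + M div g"
  proof -
    have e: "a * g ^ Suc n + M = M + (a*g^n) * g" by (simp add: ac_simps)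
    have "(M + (a*g^n) * g) div g = a*g^n + M div g" using Suc.prems by (intro div_mult_self1) simp
    thus ?thesis unfolding e .
  qed
  ultimately show ?case using Suc by simp
qed

lemma allQ_mod:
  assumes "g > 0" shows "allQ Q g n (M mod g^n) = allQ Q g n M"
  using allQ_add[OF assms, of Q n "M div g^n" "M mod g^n"] unfolding div_mult_mod_eq by simp

lemma allQ_card:
  assumes "g > 0" shows "card {M. M < g^n \<and> allQ Q g n M} = card {k. k<g \<and> Q k} ^ n"
proof (induction n)
  case 0
  have "{M. M < g^0 \<and> allQ Q g 0 M} = {0}" by auto
  then show ?case by simp
next
  case (Suc n)
  have "{M. M < g^Suc n \<and> allQ Q g (Suc n) M} = {M. M < g^n * g \<and> allQ Q g n (M div g) \<and> Q (M mod g)}"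
    by (auto simp: mult.commute)
  also have "card \<dots> = card {a. a < g^n \<and> allQ Q g n a} * card {c. c<g \<and> Q c}"
    by (rule prodcard[OF assms])
  finally show ?case using Suc.IH by simp
qed



lemma orbit:
  fixes p g x m :: nat assumes "p > 0"
  shows "g * ((g^m*x) mod p) = p * ((g * ((g^m*x) mod p)) div p) + (g^Suc m * x) mod p"
    and "(g^Suc m * x) div p = g * ((g^m*x) div p) + (g * ((g^m*x) mod p)) div p"
    and "g > 0 \<Longrightarrow> (g * ((g^m*x) mod p)) div p < g"
proof -
  have m1: "(g^Suc m * x) mod p = (g * ((g^m*x) mod p)) mod p"
    by (simp add: mod_mult_right_eq mult.assoc)
  show "g * ((g^m*x) mod p) = p * ((g * ((g^m*x) mod p)) div p) + (g^Suc m * x) mod p"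
    unfolding m1 by simp
  have e: "g^Suc m * x = g * ((g^m*x) mod p) + (g * ((g^m*x) div p)) * p"
  proof -
    define a where "a = g^m * x"
    have "g^Suc m * x = g * a" unfolding a_def by (simp add: mult.assoc)
    also have "g * a = g * (a mod p + (a div p) * p)" by simp
    also have "\<dots> = g*(a mod p) + (g*(a div p))*p" by (simp only: distrib_left mult.assoc)
    finally show ?thesis unfolding a_def .
  qed
  show "(g^Suc m * x) div p = g * ((g^m*x) div p) + (g * ((g^m*x) mod p)) div p"
    unfolding e using assms by simp
  assume "g > 0"
  have "g * ((g^m*x) mod p) < g * p" using assms \<open>g>0\<close> by simp
  thus "(g * ((g^m*x) mod p)) div p < g" using assms by (simp add: div_less_iff_less_mult mult.commute)
qed

lemma chain:
  fixes y D k :: "nat \<Rightarrow> nat" and g p v b t :: nat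
  assumes R1: "\<And>m. g * y m = p * k m + y (Suc m)"
    and R2: "\<And>m. D (Suc m) = g * D m + k m"
    and R3: "\<And>m. k m < g"
    and cop: "coprime g v" and D0: "D 0 = 0" and t: "t \<ge> 1"
  defines "Q \<equiv> (\<lambda>k. [g*b = p*k + b] (mod v))"
  shows "(\<not>[y 0 = b] (mod v) \<and> \<not>[y (t+1) = b] (mod v) \<and> (\<forall>j\<in>{1..t}. [y j = b] (mod v))) \<longleftrightarrow>
        ([g * y 0 = p * (D (t+1) div g^t) + b] (mod v) \<and> \<not>Q (D (t+1) div g^t) \<and>
         allQ Q g (t-1) (D (t+1) div g) \<and> \<not>Q (D (t+1) mod g))"
proof -
  have g0: "g > 0" using R3[of 0] by simp
  have Dmod: "D (Suc m) mod g = k m" for m using R2[of m] R3[of m] by (simp add: mult.commute)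
  have Ddiv: "D (Suc m) div g = D m" for m using R2[of m] R3[of m] g0 by (simp add: mult.commute)
  have Dpow: "D (Suc n) div g^n = k 0" for n
  proof (induction n)
    case 0 then show ?case using R2[of 0] D0 by simp
  next
    case (Suc n)
    have "D (Suc (Suc n)) div g ^ Suc n = D (Suc (Suc n)) div g div g^n" by (simp add: div_mult2_eq)
    then show ?case using Ddiv Suc by simp
  qed
  have K1: "D (t+1) div g^t = k 0" using Dpow[of t] by simp
  have K2: "D (t+1) div g = D t" "D (t+1) mod g = k t" using Ddiv[of t] Dmod[of t] by simp_all
  have aq: "allQ Q g n (D (j+n)) \<longleftrightarrow> (\<forall>i<n. Q (k (j+i)))" for n j
  proof (induction n)
    case 0 then show ?case by simp
  next
    case (Suc n)
    have "allQ Q g (Suc n) (D (j + Suc n)) \<longleftrightarrow> Q (k (j+n)) \<and> allQ Q g n (D (j+n))"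
      using Dmod[of "j+n"] Ddiv[of "j+n"] by simp
    also have "\<dots> \<longleftrightarrow> (\<forall>i<Suc n. Q (k (j+i)))" using Suc.IH less_Suc_eq by auto
    finally show ?case .
  qed
  have A3: "allQ Q g (t-1) (D t) \<longleftrightarrow> (\<forall>i<t-1. Q (k (Suc i)))"
    using aq[of "t-1" 1] t by simp
  have step: "[y (Suc m) = b] (mod v) \<longleftrightarrow> Q (k m)" if "[y m = b] (mod v)" for m
  proof -
    have "[y (Suc m) = b] (mod v) \<longleftrightarrow> [p * k m + y (Suc m) = p * k m + b] (mod v)"
      by (simp add: cong_add_lcancel_nat)
    also have "\<dots> \<longleftrightarrow> [g * y m = p * k m + b] (mod v)" by (simp add: R1)
    also have "\<dots> \<longleftrightarrow> [g * b = p * k m + b] (mod v)"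
    proof -
      have "[g * y m = g * b] (mod v)" using that by (rule cong_scalar_left)
      thus ?thesis by (meson cong_sym cong_trans)
    qed
    finally show ?thesis unfolding Q_def .
  qed
  have y1: "[y 1 = b] (mod v) \<longleftrightarrow> [g * y 0 = p * k 0 + b] (mod v)"
  proof -
    have "[y 1 = b] (mod v) \<longleftrightarrow> [p * k 0 + y 1 = p * k 0 + b] (mod v)"
      by (simp add: cong_add_lcancel_nat)
    thus ?thesis using R1[of 0] by simp
  qed
  have y0: "[y 0 = b] (mod v) \<longleftrightarrow> Q (k 0)" if "[y 1 = b] (mod v)"
  proof -
    have "[y 0 = b] (mod v) \<longleftrightarrow> [g * y 0 = g * b] (mod v)" using cop by (simp add: cong_mult_lcancel_nat)
    also have "\<dots> \<longleftrightarrow> [p * k 0 + y 1 = g * b] (mod v)" using R1[of 0] by simp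
    also have "\<dots> \<longleftrightarrow> [p * k 0 + b = g * b] (mod v)"
    proof -
      have "[p * k 0 + y 1 = p * k 0 + b] (mod v)" using that by (simp add: cong_add_lcancel_nat)
      thus ?thesis by (meson cong_sym cong_trans)
    qed
    also have "\<dots> \<longleftrightarrow> Q (k 0)" unfolding Q_def by (simp add: cong_sym_eq)
    finally show ?thesis .
  qed
  have ch: "(\<forall>j\<in>{1..Suc n}. [y j = b] (mod v)) \<longleftrightarrow> [y 1 = b] (mod v) \<and> (\<forall>i<n. Q (k (Suc i)))" for n
  proof (induction n)
    case 0 then show ?case by simp
  next
    case (Suc n)
    have "(\<forall>j\<in>{1..Suc (Suc n)}. [y j = b] (mod v)) \<longleftrightarrow>
          (\<forall>j\<in>{1..Suc n}. [y j = b] (mod v)) \<and> [y (Suc (Suc n)) = b] (mod v)"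
    proof -
      have "{1..Suc (Suc n)} = insert (Suc (Suc n)) {1..Suc n}" by auto
      thus ?thesis by auto
    qed
    also have "\<dots> \<longleftrightarrow> [y 1 = b] (mod v) \<and> (\<forall>i<Suc n. Q (k (Suc i)))"
    proof
      assume a: "(\<forall>j\<in>{1..Suc n}. [y j = b] (mod v)) \<and> [y (Suc (Suc n)) = b] (mod v)"
      hence "[y (Suc n) = b] (mod v)" by simp
      hence "Q (k (Suc n))" using step[of "Suc n"] a by simp
      thus "[y 1 = b] (mod v) \<and> (\<forall>i<Suc n. Q (k (Suc i)))" using a Suc.IH less_Suc_eq by auto
    next
      assume a: "[y 1 = b] (mod v) \<and> (\<forall>i<Suc n. Q (k (Suc i)))"
      hence b1: "\<forall>j\<in>{1..Suc n}. [y j = b] (mod v)" using Suc.IH by simp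
      hence "[y (Suc n) = b] (mod v)" by simp
      thus "(\<forall>j\<in>{1..Suc n}. [y j = b] (mod v)) \<and> [y (Suc (Suc n)) = b] (mod v)"
        using step[of "Suc n"] a b1 by simp
    qed
    finally show ?case .
  qed
  have cht: "(\<forall>j\<in>{1..t}. [y j = b] (mod v)) \<longleftrightarrow> [y 1 = b] (mod v) \<and> (\<forall>i<t-1. Q (k (Suc i)))"
    using ch[of "t-1"] t by simp
  have last: "[y (t+1) = b] (mod v) \<longleftrightarrow> Q (k t)" if "\<forall>j\<in>{1..t}. [y j = b] (mod v)"
    using step[of t] that t by simp
  show ?thesis
    unfolding K1 K2 A3 y1[symmetric]
  proof
    assume L: "\<not>[y 0 = b] (mod v) \<and> \<not>[y (t+1) = b] (mod v) \<and> (\<forall>j\<in>{1..t}. [y j = b] (mod v))"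
    hence "[y 1 = b] (mod v)" using t by auto
    thus "[y 1 = b] (mod v) \<and> \<not> Q (k 0) \<and> (\<forall>i<t - 1. Q (k (Suc i))) \<and> \<not> Q (k t)"
      using L y0 cht last by blast
  next
    assume R: "[y 1 = b] (mod v) \<and> \<not> Q (k 0) \<and> (\<forall>i<t - 1. Q (k (Suc i))) \<and> \<not> Q (k t)"
    hence all: "\<forall>j\<in>{1..t}. [y j = b] (mod v)" using cht by blast
    thus "\<not>[y 0 = b] (mod v) \<and> \<not>[y (t+1) = b] (mod v) \<and> (\<forall>j\<in>{1..t}. [y j = b] (mod v))"
      using R y0 last by blast
  qed
qed



lemma divdiff:
  fixes z L v :: nat assumes "v > 0"
  shows "z div v + L div v \<le> (z + L) div v \<and> (z + L) div v \<le> z div v + (L + v - 1) div v"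
proof -
  have e: "(z + L) div v = z div v + L div v + (z mod v + L mod v) div v" by (rule div_add1_eq)
  have a: "(z mod v + L mod v) div v \<le> 1"
  proof -
    have "z mod v + L mod v < 2 * v" using mod_less_divisor[OF assms, of z] mod_less_divisor[OF assms, of L] by linarith
    thus ?thesis using assms by (simp add: div_less_iff_less_mult less_Suc_eq_le[symmetric])
  qed
  have b: "L div v + (z mod v + L mod v) div v \<le> (L + v - 1) div v"
  proof (cases "L mod v = 0")
    case True
    then show ?thesis using assms by (simp add: div_le_mono)
  next
    case False
    have "(L + v - 1) div v = (L + (v - 1)) div v" using assms by simp
    also have "... = L div v + (v-1) div v + (L mod v + (v - 1) mod v) div v" by (rule div_add1_eq)
    also have "(L mod v + (v - 1) mod v) div v = 1"
    proof -
      have "(v-1) mod v = v - 1" using assms by simp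
      moreover have "L mod v + (v-1) \<ge> v" "L mod v + (v-1) < 2*v" using False assms
        using mod_less_divisor[OF assms, of L] by linarith+
      ultimately show ?thesis by (auto intro!: div_nat_eqI)
    qed
    finally show ?thesis using a by simp
  qed
  show ?thesis using e b by simp
qed


lemma ceil_le_iff_nat:
  fixes c N x :: nat assumes "N > 0"
  shows "((c + N - 1) div N \<le> x) = (c \<le> x * N)"
proof -
  have "((c + N - 1) div N \<le> x) = ((c + N - 1) div N < Suc x)" by (simp only: less_Suc_eq_le)
  also have "... = (c + N - 1 < Suc x * N)" using assms by (simp add: div_less_iff_less_mult)
  also have "... = (c \<le> x * N)" using assms by (cases N) auto
  finally show ?thesis .
qed

lemma rescount:
  fixes v a lo hi :: nat assumes "v > 0" "a < v" "lo \<le> hi"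
  shows "(hi - lo) div v \<le> card {x\<in>{lo..<hi}. x mod v = a} \<and>
         card {x\<in>{lo..<hi}. x mod v = a} \<le> (hi - lo + v - 1) div v"
proof -
  define z where "z = lo + v - 1 - a"
  define L where "L = hi - lo"
  have key: "\<And>c m. ((c + v - 1 - a) div v \<le> m) = (c \<le> m * v + a)"
  proof -
    fix c m :: nat
    have "((c + v - 1 - a) div v \<le> m) = ((c + v - 1 - a) div v < Suc m)" by (simp only: less_Suc_eq_le)
    also have "... = (c + v - 1 - a < Suc m * v)" using assms by (simp add: div_less_iff_less_mult)
    also have "... = (c \<le> m * v + a)"
    proof -
      obtain w where w: "v = Suc a + w" using assms(2) less_imp_Suc_add by blast
      have e1: "c + v - 1 - a = c + w" unfolding w by simp
      have e2: "Suc m * v = m * v + Suc a + w" unfolding w by simp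
      show ?thesis unfolding e1 e2 by linarith
    qed
    finally show "((c + v - 1 - a) div v \<le> m) = (c \<le> m * v + a)" .
  qed
  have seteq: "{x\<in>{lo..<hi}. x mod v = a} = (\<lambda>m. m*v+a) ` {z div v..<(z+L) div v}"
  proof (intro equalityI subsetI)
    fix x assume x: "x \<in> {x\<in>{lo..<hi}. x mod v = a}"
    define m where "m = x div v"
    have xa: "x mod v = a" "lo \<le> x" "x < hi" using x by auto
    have xe: "m * v + a = x" using div_mult_mod_eq[of x v] xa(1) unfolding m_def by simp
    have "lo \<le> m * v + a" "\<not> hi \<le> m * v + a" using xa(2,3) unfolding xe by auto
    hence "z div v \<le> m" "\<not> ((z + L) div v \<le> m)"
    proof -
      assume "lo \<le> m * v + a" "\<not> hi \<le> m * v + a"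
      have "z + L = hi + v - 1 - a" unfolding z_def L_def using assms by simp
      thus "z div v \<le> m" "\<not> ((z + L) div v \<le> m)" using key[of lo m] key[of hi m] \<open>lo \<le> m * v + a\<close> \<open>\<not> hi \<le> m * v + a\<close>
        unfolding z_def by simp_all
    qed
    thus "x \<in> (\<lambda>m. m*v+a) ` {z div v..<(z+L) div v}" using xe by (intro image_eqI[of _ _ m]) auto
  next
    fix x assume "x \<in> (\<lambda>m. m*v+a) ` {z div v..<(z+L) div v}"
    then obtain m where m0: "x = m*v+a" "m \<in> {z div v..<(z+L) div v}" by blast
    hence m: "x = m*v+a" "z div v \<le> m" "m < (z + L) div v" by auto
    have "z + L = hi + v - 1 - a" unfolding z_def L_def using assms by simp
    hence "\<not> hi \<le> m*v+a" using key[of hi m] m by simp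
    moreover have "lo \<le> m*v+a" using key[of lo m] m unfolding z_def by simp
    moreover have "x mod v = a" using m assms by simp
    ultimately show "x \<in> {x\<in>{lo..<hi}. x mod v = a}" using m by auto
  qed
  have inj: "inj_on (\<lambda>m. m*v+a) {z div v..<(z+L) div v}" using assms by (intro inj_onI) auto
  have c: "card {x\<in>{lo..<hi}. x mod v = a} = (z + L) div v - z div v"
    unfolding seteq using card_image[OF inj] by simp
  show ?thesis using divdiff[OF assms(1), of z L] unfolding c L_def by linarith
qed


lemma rho_reduce:
  fixes p g v b t :: nat
  assumes "prime p" "g \<in> {2..p-1}" "residue_primroot p g" "t \<ge> 1"
  shows "rho p g v b t = card {x. x < p \<and> \<not>[x = b] (mod v) \<and> \<not>[(g^(t+1)*x) mod p = b] (mod v) \<and>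
           (\<forall>j\<in>{1..t}. [(g^j*x) mod p = b] (mod v))}"
proof -
  define f where "f = (\<lambda>i. g ^ i mod p)"
  define C where "C = (\<lambda>x. \<not>[x = b] (mod v) \<and> \<not>[(g^(t+1)*x) mod p = b] (mod v) \<and>
           (\<forall>j\<in>{1..t}. [(g^j*x) mod p = b] (mod v)))"
  have p1: "p > 1" using assms(1) prime_gt_1_nat by blast
  have g: "2 \<le> g" "g < p" using assms(2) p1 by auto
  have fj: "(g^j * f i) mod p = g^(i+j) mod p" for i j
    unfolding f_def by (simp add: mod_mult_right_eq power_add mult.commute)
  have Cf: "C (f i) = (\<not>[g^i mod p = b] (mod v) \<and> \<not>[g^(i+t+1) mod p = b] (mod v) \<and>
      (\<forall>j\<in>{1..t}. [g^(i+j) mod p = b] (mod v)))" for i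
    unfolding C_def fj by (simp only: f_def add.assoc)
  have fp: "f (p-1) = f 0"
  proof -
    have "\<not> p dvd g" using g by (auto dest: dvd_imp_le)
    hence "[g^(p-1) = 1] (mod p)" using fermat_theorem[OF assms(1)] by blast
    thus ?thesis unfolding f_def cong_def using p1 by simp
  qed
  have s1: "{1..p-1} = insert (p-1) ({..<p-1} - {0})" using p1 by auto
  have s2: "{..<p-1} = insert 0 ({..<p-1} - {0})" using p1 by auto
  have "f ` {1..p-1} = f ` (insert (p-1) ({..<p-1} - {0}))" using s1 by (rule arg_cong)
  also have "\<dots> = f ` (insert 0 ({..<p-1} - {0}))" by (simp only: image_insert fp)
  also have "\<dots> = f ` {..<p-1}" using s2[symmetric] by (rule arg_cong)
  also have "\<dots> = totatives p"
    using residue_primroot_is_generator[OF p1 assms(3)] totient_prime[OF assms(1)]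
    unfolding f_def bij_betw_def by simp
  finally have img: "f ` {1..p-1} = {0<..<p}"
    using totatives_prime[OF assms(1)] by simp
  hence "card (f ` {1..p-1}) = card {1..p-1}" by simp
  hence inj: "inj_on f {1..p-1}" by (rule eq_card_imp_inj_on[rotated]) simp
  have "rho p g v b t = card {i \<in> {1..p-1}. C (f i)}"
    unfolding rho_def Cf by simp
  also have "\<dots> = card (f ` {i \<in> {1..p-1}. C (f i)})"
  proof -
    have "inj_on f {i \<in> {1..p-1}. C (f i)}" using inj by (rule inj_on_subset) blast
    thus ?thesis by (rule card_image[symmetric])
  qed
  also have "f ` {i \<in> {1..p-1}. C (f i)} = {x. x < p \<and> C x}"
  proof -
    have "f ` {i \<in> {1..p-1}. C (f i)} = {x \<in> f ` {1..p-1}. C x}" by blast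
    moreover have "\<not> C 0"
    proof
      assume c0: "C 0"
      have "1 \<in> {1..t}" using assms(4) by simp
      hence "[(g^1*0) mod p = b] (mod v)" using c0 unfolding C_def by blast
      moreover have "\<not>[0 = b] (mod v)" using c0 unfolding C_def by blast
      ultimately show False by simp
    qed
    ultimately show ?thesis unfolding img
    proof -
      assume e: "f ` {i \<in> {1..p-1}. C (f i)} = {x \<in> {0<..<p}. C x}" and n0: "\<not> C 0"
      have "{x \<in> {0<..<p}. C x} = {x. x < p \<and> C x}"
      proof (intro equalityI subsetI)
        fix x assume "x \<in> {x. x < p \<and> C x}"
        hence "x < p" "C x" by simp_all
        moreover have "x \<noteq> 0" using n0 \<open>C x\<close> by metis
        ultimately show "x \<in> {x \<in> {0<..<p}. C x}" by simp
      qed simp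
      thus ?thesis using e by simp
    qed
  qed
  finally show ?thesis unfolding C_def .
qed


lemma interval:
  fixes N p K x :: nat assumes "N > 0" "p > 0" "K < N"
  shows "(x < p \<and> (N*x) div p = K) \<longleftrightarrow> x \<in> {(K*p + N - 1) div N ..< ((K+1)*p + N - 1) div N}"
proof -
  have d: "(N*x) div p = K \<longleftrightarrow> K*p \<le> N*x \<and> N*x < (K+1)*p"
  proof -
    have "(N*x) div p = K \<longleftrightarrow> \<not> (N*x) div p < K \<and> (N*x) div p < K+1" by auto
    also have "\<dots> \<longleftrightarrow> \<not> N*x < K*p \<and> N*x < (K+1)*p" using assms(2) by (simp only: div_less_iff_less_mult)
    finally show ?thesis by (simp add: not_less)
  qed
  have lo: "(K*p + N - 1) div N \<le> x \<longleftrightarrow> K*p \<le> x*N" by (rule ceil_le_iff_nat[OF assms(1)])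
  have hi: "((K+1)*p + N - 1) div N \<le> x \<longleftrightarrow> (K+1)*p \<le> x*N" by (rule ceil_le_iff_nat[OF assms(1)])
  have xp: "N*x < (K+1)*p \<Longrightarrow> x < p"
  proof -
    assume "N*x < (K+1)*p"
    also have "(K+1)*p \<le> N*p" using assms(3) by (intro mult_le_mono1) simp
    finally show "x < p" using assms(1) by simp
  qed
  show ?thesis using d lo hi xp by (auto simp: mult.commute not_le)
qed

lemma hi_lo:
  fixes N p K q r :: nat assumes "N > 0" "p = q*N + r" "r < N"
  shows "(K*p + N - 1) div N \<le> ((K+1)*p + N - 1) div N"
    and "q \<le> ((K+1)*p + N - 1) div N - (K*p + N - 1) div N"
    and "((K+1)*p + N - 1) div N - (K*p + N - 1) div N \<le> q + 1"
proof -
  have e: "(K+1)*p + N - 1 = (K*p + N - 1) + p" using assms(1) by simp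
  have pd: "p div N = q" using assms by simp
  have pd2: "(p + N - 1) div N \<le> q + 1"
  proof -
    have "p + N - 1 < (q+2)*N" using assms by (simp add: algebra_simps)
    hence "(p + N - 1) div N < q + 2" using assms(1) by (simp add: div_less_iff_less_mult)
    thus ?thesis by simp
  qed
  have dd: "(K*p + N - 1) div N + p div N \<le> ((K*p + N - 1) + p) div N \<and>
            ((K*p + N - 1) + p) div N \<le> (K*p + N - 1) div N + (p + N - 1) div N"
    by (rule divdiff[OF assms(1)])
  show "(K*p + N - 1) div N \<le> ((K+1)*p + N - 1) div N" using dd unfolding e by linarith
  show "q \<le> ((K+1)*p + N - 1) div N - (K*p + N - 1) div N" using dd pd unfolding e by linarith
  show "((K+1)*p + N - 1) div N - (K*p + N - 1) div N \<le> q + 1" using dd pd2 unfolding e by linarith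
qed

lemma x_char:
  fixes p g v b t x :: nat
  assumes "p > 0" "coprime g v" "t \<ge> 1" "x < p" "g > 0"
  shows "(\<not>[x = b] (mod v) \<and> \<not>[(g^(t+1)*x) mod p = b] (mod v) \<and> (\<forall>j\<in>{1..t}. [(g^j*x) mod p = b] (mod v))) \<longleftrightarrow>
        ([g * x = p * (((g^(t+1)*x) div p) div g^t) + b] (mod v) \<and> \<not>[g*b = p*(((g^(t+1)*x) div p) div g^t) + b] (mod v) \<and>
         allQ (\<lambda>k. [g*b = p*k + b] (mod v)) g (t-1) (((g^(t+1)*x) div p) div g) \<and> \<not>[g*b = p*(((g^(t+1)*x) div p) mod g) + b] (mod v))"
proof -
  define y where "y = (\<lambda>j. (g^j*x) mod p)"
  define D where "D = (\<lambda>j. (g^j*x) div p)"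
  define k where "k = (\<lambda>j. (g * ((g^j*x) mod p)) div p)"
  have R1: "\<And>m. g * y m = p * k m + y (Suc m)" unfolding y_def k_def by (rule orbit(1)[OF assms(1)])
  have R2: "\<And>m. D (Suc m) = g * D m + k m" unfolding D_def k_def by (rule orbit(2)[OF assms(1)])
  have R3: "\<And>m. k m < g" unfolding k_def by (rule orbit(3)[OF assms(1) assms(5)])
  have D0: "D 0 = 0" unfolding D_def using assms(4) by simp
  have y0: "y 0 = x" unfolding y_def using assms(4) by simp
  have Dt: "D (t+1) = (g^(t+1)*x) div p" unfolding D_def by simp
  have yj: "y j = (g^j*x) mod p" for j unfolding y_def by simp
  have g0x: "g^0*x mod p = x" using assms(4) by simp
  show ?thesis using chain[of g y p k D, OF R1 R2 R3 assms(2) D0 assms(3), of b]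
    unfolding yj Dt g0x .
qed

theorem theorem10:
  fixes p v g t b q r :: nat
  assumes "prime p" and "odd p"
    and "1 < v" and "v < p - 1"
    and "g \<in> {2..p-1}" and "residue_primroot p g" and "coprime g v"
    and "t \<ge> 1" and "b \<in> {0..v-1}"
    and "p = q * g ^ (t + 1) + r" and "r < g ^ (t + 1)"
  shows "real_of_int (\<lfloor>real g / real v\<rfloor> ^ (t - 1) * \<lfloor>real ((v - 1) * g) / real v\<rfloor> ^ 2
            * \<lfloor>real q / real v\<rfloor>) \<le> real (rho p g v b t) \<and>
         real (rho p g v b t) \<le> real_of_int (\<lceil>real g / real v\<rceil> ^ (t - 1)
            * \<lceil>real ((v - 1) * g) / real v\<rceil> ^ 2 * \<lceil>real (q + 1) / real v\<rceil>)"
proof -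
  have p1: "p > 1" using assms(1) prime_gt_1_nat by blast
  have v0: "v > 0" using assms(3) by simp
  have g2: "g \<ge> 2" "g < p" using assms(5) p1 by auto
  have g0: "g > 0" using g2 by simp
  have copv: "coprime p v"
  proof (rule prime_imp_coprime[OF assms(1)])
    show "\<not> p dvd v" using v0 assms(4) by (auto dest: dvd_imp_le)
  qed
  define N where "N = g^(t+1)"
  have N0: "N > 0" using g0 by (simp add: N_def)
  have pq: "p = q*N + r" "r < N" using assms(10,11) N_def by simp_all
  define Q where "Q = (\<lambda>k. [g*b = p*k + b] (mod v))"
  define Vd where "Vd = (\<lambda>K. \<not>Q (K div g^t) \<and> allQ Q g (t-1) (K div g) \<and> \<not>Q (K mod g))"
  define V where "V = {K. K < N \<and> Vd K}"
  define T where "T = (\<lambda>K. {x. x < p \<and> (N*x) div p = K \<and> [g*x = p*(K div g^t) + b] (mod v)})"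
  define C where "C = (\<lambda>x. \<not>[x = b] (mod v) \<and> \<not>[(g^(t+1)*x) mod p = b] (mod v) \<and>
                       (\<forall>j\<in>{1..t}. [(g^j*x) mod p = b] (mod v)))"
  have rho_eq: "rho p g v b t = card {x. x<p \<and> C x}"
    unfolding C_def by (rule rho_reduce[OF assms(1,5,6,8)])
  have Cx: "C x \<longleftrightarrow> [g*x = p*(((N*x) div p) div g^t) + b] (mod v) \<and> Vd ((N*x) div p)" if "x < p" for x
    unfolding C_def Vd_def Q_def N_def using x_char[OF _ assms(7,8) that g0, of b] p1 by simp
  have fx: "(N*x) div p < N" if "x < p" for x
  proof -
    have "N*x < N*p" using that N0 by simp
    thus ?thesis using p1 by (simp add: div_less_iff_less_mult)
  qed
  have Seq: "{x. x<p \<and> C x} = (\<Union>K\<in>V. T K)"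
  proof (intro equalityI subsetI)
    fix x assume "x \<in> {x. x<p \<and> C x}"
    hence x: "x < p" "C x" by auto
    show "x \<in> (\<Union>K\<in>V. T K)"
      using x Cx[OF x(1)] fx[OF x(1)] unfolding V_def T_def by blast
  next
    fix x assume "x \<in> (\<Union>K\<in>V. T K)"
    then obtain K where K: "K \<in> V" "x \<in> T K" by blast
    hence "x < p" "(N*x) div p = K" "[g*x = p*(K div g^t) + b] (mod v)" unfolding T_def by auto
    thus "x \<in> {x. x<p \<and> C x}" using Cx K(1) unfolding V_def by auto
  qed
  have finV: "finite V" unfolding V_def by simp
  have card_sum: "card {x. x<p \<and> C x} = (\<Sum>K\<in>V. card (T K))"
    unfolding Seq
  proof (rule card_UN_disjoint[OF finV])
    show "\<forall>K\<in>V. finite (T K)" unfolding T_def by simp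
    show "\<forall>i\<in>V. \<forall>j\<in>V. i \<noteq> j \<longrightarrow> T i \<inter> T j = {}" unfolding T_def by blast
  qed
  have TK: "q div v \<le> card (T K) \<and> card (T K) * v \<le> q + v" if KV: "K \<in> V" for K
  proof -
    have KN: "K < N" using KV by (simp add: V_def)
    obtain a where a: "a < v" "\<forall>x. [g*x + 0 = p*(K div g^t) + b] (mod v) \<longleftrightarrow> x mod v = a"
      using lin_solve[OF assms(7) v0] by blast
    define lo where "lo = (K*p + N - 1) div N"
    define hi where "hi = ((K+1)*p + N - 1) div N"
    have p0: "p > 0" using p1 by simp
    have iv: "(x < p \<and> (N*x) div p = K) \<longleftrightarrow> x \<in> {lo..<hi}" for x
      using interval[OF N0 p0 KN, of x] unfolding lo_def hi_def .
    have a2: "[g*x = p*(K div g^t) + b] (mod v) \<longleftrightarrow> x mod v = a" for x using a(2) by simp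
    have Teq: "T K = {x\<in>{lo..<hi}. x mod v = a}"
      unfolding T_def
    proof (rule Collect_cong)
      fix x show "(x < p \<and> N*x div p = K \<and> [g*x = p*(K div g^t) + b] (mod v)) = (x\<in>{lo..<hi} \<and> x mod v = a)"
        using iv[of x] a2[of x] by blast
    qed
    have lh: "lo \<le> hi" "q \<le> hi - lo" "hi - lo \<le> q + 1"
      unfolding lo_def hi_def using hi_lo[OF N0 pq] by blast+
    have rc: "(hi - lo) div v \<le> card (T K) \<and> card (T K) \<le> (hi - lo + v - 1) div v"
      unfolding Teq by (rule rescount[OF v0 a(1) lh(1)])
    have "q div v \<le> (hi - lo) div v" using lh(2) by (rule div_le_mono)
    moreover have "card (T K) * v \<le> q + v"
    proof -
      have "card (T K) * v \<le> ((hi - lo + v - 1) div v) * v" using rc by simp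
      also have "\<dots> \<le> hi - lo + v - 1" by simp
      also have "\<dots> \<le> q + v" using lh(3) v0 by simp
      finally show ?thesis .
    qed
    ultimately show ?thesis using rc by simp
  qed
  define A where "A = {k. k < g \<and> Q k}"
  define B where "B = {k. k < g \<and> \<not> Q k}"
  obtain a0 where a0: "a0 < v" "\<forall>x. [p*x + b = g*b] (mod v) \<longleftrightarrow> x mod v = a0"
    using lin_solve[OF copv v0] by blast
  have Aeq: "A = {k\<in>{0..<g}. k mod v = a0}" unfolding A_def Q_def using a0(2) by (auto simp: cong_sym_eq)
  have Ab: "g div v \<le> card A \<and> card A \<le> (g + v - 1) div v"
    using rescount[OF v0 a0(1), of 0 g] unfolding Aeq by simp
  have AB: "card A + card B = g"
  proof -
    have "A \<union> B = {..<g}" "A \<inter> B = {}" unfolding A_def B_def by auto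
    thus ?thesis using card_Un_disjoint[of A B] unfolding A_def B_def by simp
  qed
  have cardV: "card V = card B * card A ^ (t-1) * card B"
  proof -
    have gt: "g^t = g * g^(t-1)" using assms(8) by (cases t) auto
    have NN: "N = g^t * g" unfolding N_def by simp
    have "V = {K. K < g^t * g \<and> (\<lambda>L. \<not>Q (L div g^(t-1)) \<and> allQ Q g (t-1) L) (K div g) \<and> \<not> Q (K mod g)}"
      unfolding V_def Vd_def NN by (auto simp: gt div_mult2_eq)
    hence "card V = card {L. L < g^t \<and> \<not>Q (L div g^(t-1)) \<and> allQ Q g (t-1) L} * card B"
      unfolding B_def using prodcard[where m=g and n="g^t" and P="\<lambda>L. \<not>Q (L div g^(t-1)) \<and> allQ Q g (t-1) L" and R="\<lambda>c. \<not> Q c"] g0 by simp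
    also have "{L. L < g^t \<and> \<not>Q (L div g^(t-1)) \<and> allQ Q g (t-1) L} =
               {L. L < g * g^(t-1) \<and> (\<lambda>a. \<not>Q a) (L div g^(t-1)) \<and> allQ Q g (t-1) (L mod g^(t-1))}"
      unfolding gt using allQ_mod[OF g0] by simp
    also have "card \<dots> = card B * card {M. M < g^(t-1) \<and> allQ Q g (t-1) M}"
      unfolding B_def using prodcard[where m="g^(t-1)" and n=g and P="\<lambda>a. \<not>Q a" and R="allQ Q g (t-1)"] g0 by simp
    also have "card {M. M < g^(t-1) \<and> allQ Q g (t-1) M} = card A ^ (t-1)"
      unfolding A_def by (rule allQ_card[OF g0])
    finally show ?thesis by simp
  qed
  define al where "al = card A"
  define be where "be = card B"
  define c where "c = (\<lambda>K. card (T K))"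
  have rho_sum: "int (rho p g v b t) = (\<Sum>K\<in>V. int (c K))"
    unfolding rho_eq card_sum c_def by simp
  have vr: "real v > 0" using v0 by simp
  have fl1: "\<lfloor>real g / real v\<rfloor> = int (g div v)" by (rule floor_divide_of_nat_eq)
  have fl3: "\<lfloor>real q / real v\<rfloor> = int (q div v)" by (rule floor_divide_of_nat_eq)
  have alv: "al * v \<le> g + v - 1" "g < al * v + v"
  proof -
    have "al * v \<le> ((g + v - 1) div v) * v" using Ab unfolding al_def by simp
    also have "\<dots> \<le> g + v - 1" by simp
    finally show "al * v \<le> g + v - 1" .
    have "g div v < g div v + 1" by simp
    hence "g < (g div v + 1) * v" using v0 by (simp only: div_less_iff_less_mult)
    also have "\<dots> \<le> (al + 1) * v" using Ab unfolding al_def by (intro mult_le_mono1) simp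
    finally show "g < al * v + v" by simp
  qed
  have albe: "real al + real be = real g" using AB unfolding al_def be_def by simp
  have alv': "real al * real v \<le> real g + real v - 1" "real g < real al * real v + real v"
  proof -
    have "real (al * v) \<le> real (g + v - 1)" using alv(1) by (simp only: of_nat_le_iff)
    thus "real al * real v \<le> real g + real v - 1" using v0 by simp
    have "real g < real (al * v + v)" using alv(2) by (simp only: of_nat_less_iff)
    thus "real g < real al * real v + real v" by simp
  qed
  have rvg: "real ((v - 1) * g) = real v * real g - real g" using v0 by (simp add: of_nat_diff algebra_simps)
  have L1: "0 \<le> \<lfloor>real g / real v\<rfloor>" "\<lfloor>real g / real v\<rfloor> \<le> int al"
    using Ab unfolding fl1 al_def by simp_all
  have L2: "0 \<le> \<lfloor>real ((v - 1) * g) / real v\<rfloor>" "\<lfloor>real ((v - 1) * g) / real v\<rfloor> \<le> int be"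
  proof -
    show "0 \<le> \<lfloor>real ((v - 1) * g) / real v\<rfloor>" by simp
    have "real ((v - 1) * g) < (real be + 1) * real v"
    proof -
      have beq: "real be = real g - real al" using albe by simp
      have "(real be + 1) * real v = real v * real g - real al * real v + real v"
        unfolding beq by (simp add: algebra_simps)
      thus ?thesis unfolding rvg using alv'(1) by linarith
    qed
    hence "real ((v - 1) * g) / real v < real be + 1" using vr by (simp add: pos_divide_less_eq)
    thus "\<lfloor>real ((v - 1) * g) / real v\<rfloor> \<le> int be" by (simp add: floor_le_iff)
  qed
  have L3: "0 \<le> \<lfloor>real q / real v\<rfloor>" "\<And>K. K \<in> V \<Longrightarrow> \<lfloor>real q / real v\<rfloor> \<le> int (c K)"
    using TK unfolding fl3 c_def by simp_all
  have U1: "int al \<le> \<lceil>real g / real v\<rceil>"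
  proof -
    have "(real al - 1) * real v < real g" using alv'(1) by (simp add: algebra_simps)
    hence "real al - 1 < real g / real v" using vr by (simp add: pos_less_divide_eq)
    thus ?thesis by (simp add: le_ceiling_iff)
  qed
  have U2: "int be \<le> \<lceil>real ((v - 1) * g) / real v\<rceil>"
  proof -
    have "(real be - 1) * real v < real ((v - 1) * g)"
    proof -
      have beq: "real be = real g - real al" using albe by simp
      have "(real be - 1) * real v = real v * real g - real al * real v - real v"
        unfolding beq by (simp add: algebra_simps)
      thus ?thesis unfolding rvg using alv'(2) by linarith
    qed
    hence "real be - 1 < real ((v - 1) * g) / real v" using vr by (simp add: pos_less_divide_eq)
    thus ?thesis by (simp add: le_ceiling_iff)
  qed
  have U3: "\<And>K. K \<in> V \<Longrightarrow> int (c K) \<le> \<lceil>real (q + 1) / real v\<rceil>"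
  proof -
    fix K assume "K \<in> V"
    hence "c K * v \<le> q + v" using TK unfolding c_def by simp
    hence "real (c K * v) \<le> real (q + v)" by (simp only: of_nat_le_iff)
    hence "(real (c K) - 1) * real v < real (q + 1)" by (simp add: algebra_simps)
    hence "real (c K) - 1 < real (q + 1) / real v" using vr by (simp add: pos_less_divide_eq)
    thus "int (c K) \<le> \<lceil>real (q + 1) / real v\<rceil>" by (simp add: le_ceiling_iff)
  qed
  have cV: "int (card V) = int al ^ (t-1) * int be ^ 2"
    unfolding cardV al_def be_def by (simp add: power2_eq_square)
  have lower: "\<lfloor>real g / real v\<rfloor> ^ (t - 1) * \<lfloor>real ((v - 1) * g) / real v\<rfloor> ^ 2
            * \<lfloor>real q / real v\<rfloor> \<le> int (rho p g v b t)"
  proof -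
    have "\<lfloor>real g / real v\<rfloor> ^ (t - 1) * \<lfloor>real ((v - 1) * g) / real v\<rfloor> ^ 2 \<le> int al ^ (t-1) * int be ^ 2"
      by (rule mult_mono[OF power_mono[OF L1(2) L1(1)] power_mono[OF L2(2) L2(1)]]) simp_all
    hence "\<lfloor>real g / real v\<rfloor> ^ (t - 1) * \<lfloor>real ((v - 1) * g) / real v\<rfloor> ^ 2 * \<lfloor>real q / real v\<rfloor>
           \<le> int (card V) * \<lfloor>real q / real v\<rfloor>" unfolding cV using L3(1) by (rule mult_right_mono)
    also have "\<dots> \<le> (\<Sum>K\<in>V. int (c K))" using sum_bounded_below[of V "\<lfloor>real q / real v\<rfloor>" "\<lambda>K. int (c K)"] L3(2) by simp
    finally show ?thesis unfolding rho_sum .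
  qed
  have upper: "int (rho p g v b t) \<le> \<lceil>real g / real v\<rceil> ^ (t - 1)
            * \<lceil>real ((v - 1) * g) / real v\<rceil> ^ 2 * \<lceil>real (q + 1) / real v\<rceil>"
  proof -
    have "int (rho p g v b t) \<le> int (card V) * \<lceil>real (q + 1) / real v\<rceil>"
      unfolding rho_sum using sum_bounded_above[of V "\<lambda>K. int (c K)" "\<lceil>real (q + 1) / real v\<rceil>"] U3 by simp
    also have "\<dots> \<le> \<lceil>real g / real v\<rceil> ^ (t - 1) * \<lceil>real ((v - 1) * g) / real v\<rceil> ^ 2 * \<lceil>real (q + 1) / real v\<rceil>"
    proof (rule mult_right_mono)
      show "int (card V) \<le> \<lceil>real g / real v\<rceil> ^ (t - 1) * \<lceil>real ((v - 1) * g) / real v\<rceil> ^ 2"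
        unfolding cV
      proof (rule mult_mono[OF power_mono[OF U1] power_mono[OF U2]])
        have "0 \<le> \<lceil>real g / real v\<rceil>" using U1 by linarith
        thus "0 \<le> \<lceil>real g / real v\<rceil> ^ (t - 1)" by simp
      qed simp_all
      have "0 \<le> real (q + 1) / real v" by simp
      thus "0 \<le> \<lceil>real (q + 1) / real v\<rceil>" by linarith
    qed
    finally show ?thesis .
  qed
  show ?thesis
  proof
    have "real_of_int (\<lfloor>real g / real v\<rfloor> ^ (t - 1) * \<lfloor>real ((v - 1) * g) / real v\<rfloor> ^ 2
            * \<lfloor>real q / real v\<rfloor>) \<le> real_of_int (int (rho p g v b t))"
      using lower by (simp only: of_int_le_iff)
    thus "real_of_int (\<lfloor>real g / real v\<rfloor> ^ (t - 1) * \<lfloor>real ((v - 1) * g) / real v\<rfloor> ^ 2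
            * \<lfloor>real q / real v\<rfloor>) \<le> real (rho p g v b t)" by simp
    have "real_of_int (int (rho p g v b t)) \<le> real_of_int (\<lceil>real g / real v\<rceil> ^ (t - 1)
            * \<lceil>real ((v - 1) * g) / real v\<rceil> ^ 2 * \<lceil>real (q + 1) / real v\<rceil>)"
      using upper by (simp only: of_int_le_iff)
    thus "real (rho p g v b t) \<le> real_of_int (\<lceil>real g / real v\<rceil> ^ (t - 1)
            * \<lceil>real ((v - 1) * g) / real v\<rceil> ^ 2 * \<lceil>real (q + 1) / real v\<rceil>)" by simp
  qed
qed


end
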